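(* Let $E$ be a separable metric space, $\mu$ a probability measure on $\mathcal{B}(E)$, and $S : E \to E$ a Borel measurable map. Assume that 1. for every $A \in \mathcal{B}(E)$, $$\lim_{k\to\infty}\sup_{i \in \mathbb{N}} \left|\mu(S^{-i}A \cap S^{-k}S^{-i}A) - \mu(S^{-i}A)\,\mu(S^{-k}S^{-i}A)\right| = 0,$$ and 2. $(E, \mathcal{B}(E), \mu, S)$ is asymptotically stationary with stationary limit $\nu$. For every $n \in \mathbb{N}$ define $\mu_n : \mathcal{B}(E^n) \to [0,1]$ by $\mu_n(A) = \mu\{x \in E : (S(x), \dots, S^n(x)) \in A\}$. Then for every $g \in C_b(E)$, $$\lim_{n\to\infty}\int_{E^n} \left|\frac{1}{n}\sum_{i=1}^n g(x_i) - \int_E g\,d\nu\right|^2 d\mu_n(x_1,\dots,x_n) = 0.$$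
   Context: $\mathcal{B}(E)$ is the Borel $\sigma$-algebra; $S^k$ is the $k$-fold composition of $S$ and $S^{-k}A=(S^k)^{-1}(A)$; $\mathbb{N}=\{1,2,\dots\}$. $(E,\mathcal{B}(E),\mu,S)$ is asymptotically stationary with stationary limit $\nu$ if $\nu(A)=\lim_{k\to\infty}\mu(S^{-k}A)$ exists for all $A\in\mathcal{B}(E)$. $C_b(E)$ denotes the bounded continuous scalar-valued functions on $E$. *)

theory Defs
  imports "HOL-Probability.Probability"
begin

definition asymptotically_stationary ::
  "'a::topological_space measure \<Rightarrow> ('a \<Rightarrow> 'a) \<Rightarrow> 'a measure \<Rightarrow> bool" where
  "asymptotically_stationary \<mu> S \<nu> \<longleftrightarrow>
     sets \<nu> = sets borel \<and>
     (\<forall>A\<in>sets borel. (\<lambda>k. emeasure \<mu> ((S ^^ k) -` A)) \<longlonglongrightarrow> emeasure \<nu> A)"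

definition mu_n :: "'a::topological_space measure \<Rightarrow> ('a \<Rightarrow> 'a) \<Rightarrow> nat \<Rightarrow> (nat \<Rightarrow> 'a) measure" where
  "mu_n \<mu> S n = distr \<mu> (PiM {1..n} (\<lambda>_. borel)) (\<lambda>x. \<lambda>i\<in>{1..n}. (S ^^ i) x)"

end

theory Submission
  imports Defs
begin

locale ast = prob_space M for M :: "'a::metric_space measure" +
  fixes S :: "'a \<Rightarrow> 'a"
  assumes sM: "sets M = sets borel" and Smeas: "S \<in> borel_measurable borel"
begin

lemma space_M[simp]: "space M = UNIV"
  using sets_eq_imp_space_eq[OF sM] by simp

lemma measM_eq: "measurable M N = measurable borel N"
  by (rule measurable_cong_sets[OF sM refl])

lemma Sn_meas[measurable]: "(S ^^ i) \<in> measurable M M"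
proof -
  have "S \<in> measurable M M" using Smeas measurable_cong_sets[OF sM sM] by simp
  then show ?thesis by (rule measurable_compose_n)
qed

lemma Sn_meas_borel: "(S ^^ i) \<in> measurable M borel"
  using Sn_meas[of i] measurable_cong_sets[OF refl sM, of M] by simp

definition BM :: "('a \<Rightarrow> real) \<Rightarrow> bool" where
  "BM f \<longleftrightarrow> f \<in> borel_measurable borel \<and> (\<exists>B. \<forall>x. \<bar>f x\<bar> \<le> B)"

lemma BM_comp_meas: "BM f \<Longrightarrow> (\<lambda>x. f ((S ^^ i) x)) \<in> borel_measurable M"
  unfolding BM_def using measurable_compose[OF Sn_meas_borel] by blast

lemma BM_int: "BM f \<Longrightarrow> integrable M (\<lambda>x. f ((S ^^ i) x))"
proof -
  assume a: "BM f"
  then obtain B where B: "\<forall>x. \<bar>f x\<bar> \<le> B" unfolding BM_def by blast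
  show ?thesis
    by (rule integrable_const_bound[where B=B]) (use B BM_comp_meas[OF a] in auto)
qed

lemma BM_int2: "BM f \<Longrightarrow> BM h \<Longrightarrow> integrable M (\<lambda>x. f ((S ^^ i) x) * h ((S ^^ j) x))"
proof -
  assume a: "BM f" "BM h"
  then obtain B C where B: "\<forall>x. \<bar>f x\<bar> \<le> B" "\<forall>x. \<bar>h x\<bar> \<le> C" unfolding BM_def by blast
  have "\<bar>f ((S ^^ i) x) * h ((S ^^ j) x)\<bar> \<le> B * C" for x
    unfolding abs_mult using B by (meson abs_ge_zero mult_mono order_trans)
  then show ?thesis
    by (intro integrable_const_bound[where B="B*C"]) (use BM_comp_meas[OF a(1)] BM_comp_meas[OF a(2)] in auto)
qed

lemma abs_int_le: fixes f :: "'a \<Rightarrow> real" shows "integrable M f \<Longrightarrow> (\<And>x. \<bar>f x\<bar> \<le> c) \<Longrightarrow> \<bar>integral\<^sup>L M f\<bar> \<le> c"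
proof -
  assume i: "integrable M f" and b: "\<And>x. \<bar>f x\<bar> \<le> c"
  have "\<bar>integral\<^sup>L M f\<bar> \<le> (\<integral>x. \<bar>f x\<bar> \<partial>M)"
    using integral_norm_bound[of M f] by simp
  also have "\<dots> \<le> (\<integral>x. c \<partial>M)"
    by (rule integral_mono) (use i b in auto)
  also have "\<dots> = c" using prob_space by simp
  finally show ?thesis by simp
qed

definition cov :: "nat \<Rightarrow> nat \<Rightarrow> ('a \<Rightarrow> real) \<Rightarrow> ('a \<Rightarrow> real) \<Rightarrow> real" where
  "cov i j f h = (\<integral>x. f ((S ^^ i) x) * h ((S ^^ j) x) \<partial>M)
     - (\<integral>x. f ((S ^^ i) x) \<partial>M) * (\<integral>x. h ((S ^^ j) x) \<partial>M)"

lemma cov_sym: "cov i j f f = cov j i f f"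
  unfolding cov_def by (simp add: mult.commute)

lemma cov_sum:
  assumes I: "finite I" and BMs: "\<And>l. l \<in> I \<Longrightarrow> BM (\<phi> l)"
  shows "cov i j (\<lambda>x. \<Sum>l\<in>I. c l * \<phi> l x) (\<lambda>x. \<Sum>l\<in>I. c l * \<phi> l x)
       = (\<Sum>l\<in>I. \<Sum>m\<in>I. c l * c m * cov i j (\<phi> l) (\<phi> m))"
proof -
  have e1: "(\<integral>x. (\<Sum>l\<in>I. c l * \<phi> l ((S ^^ i) x)) * (\<Sum>m\<in>I. c m * \<phi> m ((S ^^ j) x)) \<partial>M)
     = (\<Sum>l\<in>I. \<Sum>m\<in>I. c l * c m * (\<integral>x. \<phi> l ((S ^^ i) x) * \<phi> m ((S ^^ j) x) \<partial>M))"
  proof -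
    have "(\<lambda>x. (\<Sum>l\<in>I. c l * \<phi> l ((S ^^ i) x)) * (\<Sum>m\<in>I. c m * \<phi> m ((S ^^ j) x)))
       = (\<lambda>x. \<Sum>l\<in>I. \<Sum>m\<in>I. c l * c m * (\<phi> l ((S ^^ i) x) * \<phi> m ((S ^^ j) x)))"
      by (auto simp: sum_product mult_ac)
    moreover have "(\<integral>x. (\<Sum>l\<in>I. \<Sum>m\<in>I. c l * c m * (\<phi> l ((S ^^ i) x) * \<phi> m ((S ^^ j) x))) \<partial>M)
       = (\<Sum>l\<in>I. \<integral>x. (\<Sum>m\<in>I. c l * c m * (\<phi> l ((S ^^ i) x) * \<phi> m ((S ^^ j) x))) \<partial>M)"
      apply (rule Bochner_Integration.integral_sum[where I=I and M=M and f="\<lambda>l x. \<Sum>m\<in>I. c l * c m * (\<phi> l ((S ^^ i) x) * \<phi> m ((S ^^ j) x))"])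
      apply (auto intro!: integrable_sum integrable_mult_right BM_int2 BMs)
      done
    moreover have "\<And>l. l \<in> I \<Longrightarrow> (\<integral>x. (\<Sum>m\<in>I. c l * c m * (\<phi> l ((S ^^ i) x) * \<phi> m ((S ^^ j) x))) \<partial>M)
       = (\<Sum>m\<in>I. c l * c m * (\<integral>x. \<phi> l ((S ^^ i) x) * \<phi> m ((S ^^ j) x) \<partial>M))"
      by (subst Bochner_Integration.integral_sum) (use BM_int2 BMs in auto)
    ultimately show ?thesis by simp
  qed
  have e2: "\<And>k. (\<integral>x. (\<Sum>l\<in>I. c l * \<phi> l ((S ^^ k) x)) \<partial>M) = (\<Sum>l\<in>I. c l * (\<integral>x. \<phi> l ((S ^^ k) x) \<partial>M))"
    by (subst Bochner_Integration.integral_sum) (use BM_int BMs in auto)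
  show ?thesis unfolding cov_def e1 e2
    by (simp add: sum_product sum_subtractf[symmetric] right_diff_distrib mult_ac)
qed


lemma BM_ind: "A \<in> sets borel \<Longrightarrow> BM (indicator A)"
  unfolding BM_def by (auto intro!: exI[of _ 1] simp: indicator_def)

lemma cov_ind: assumes "A \<in> sets borel"
  shows "cov i j (indicator A) (indicator A) = measure M ((S ^^ i) -` A \<inter> (S ^^ j) -` A)
     - measure M ((S ^^ i) -` A) * measure M ((S ^^ j) -` A)"
proof -
  have "(\<lambda>x. indicator A ((S ^^ i) x) * indicator A ((S ^^ j) x)) = (indicator ((S ^^ i) -` A \<inter> (S ^^ j) -` A) :: 'a \<Rightarrow> real)"
    by (auto simp: indicator_def)
  moreover have "\<And>k. (\<lambda>x. indicator A ((S ^^ k) x)) = (indicator ((S ^^ k) -` A) :: 'a \<Rightarrow> real)"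
    by (auto simp: indicator_def)
  ultimately show ?thesis unfolding cov_def by simp
qed

lemma cov_ind_abs_le: assumes "A \<in> sets borel" shows "\<bar>cov i j (indicator A) (indicator A)\<bar> \<le> 2"
proof -
  have a: "0 \<le> measure M X" "measure M X \<le> 1" for X by auto
  have "\<bar>measure M ((S ^^ i) -` A) * measure M ((S ^^ j) -` A)\<bar> \<le> 1"
    using a by (simp add: abs_mult mult_le_one)
  then show ?thesis unfolding cov_ind[OF assms] using a[of "(S ^^ i) -` A \<inter> (S ^^ j) -` A"] by linarith
qed

definition u :: "'a set \<Rightarrow> nat \<Rightarrow> real" where
  "u A k = (SUP i\<in>{1::nat..}. \<bar>measure M ((S ^^ i) -` A \<inter> (S ^^ k) -` ((S ^^ i) -` A))
                - measure M ((S ^^ i) -` A) * measure M ((S ^^ k) -` ((S ^^ i) -` A))\<bar>)"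

lemma u_bound: assumes A: "A \<in> sets borel" and i: "1 \<le> i"
  shows "\<bar>cov i (i + k) (indicator A) (indicator A)\<bar> \<le> u A k"
proof -
  have pre: "(S ^^ k) -` ((S ^^ i) -` A) = (S ^^ (i + k)) -` A" for i
    by (auto simp: funpow_add)
  have "\<bar>cov i (i + k) (indicator A) (indicator A)\<bar> = (\<lambda>i. \<bar>measure M ((S ^^ i) -` A \<inter> (S ^^ k) -` ((S ^^ i) -` A))
                - measure M ((S ^^ i) -` A) * measure M ((S ^^ k) -` ((S ^^ i) -` A))\<bar>) i"
    by (simp add: pre cov_ind[OF A])
  also have "\<dots> \<le> u A k" unfolding u_def
  proof (rule cSUP_upper)
    show "i \<in> {1..}" using i by simp
    show "bdd_above ((\<lambda>i. \<bar>measure M ((S ^^ i) -` A \<inter> (S ^^ k) -` ((S ^^ i) -` A))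
                - measure M ((S ^^ i) -` A) * measure M ((S ^^ k) -` ((S ^^ i) -` A))\<bar>) ` {1..})"
      using cov_ind_abs_le[OF A] by (intro bdd_aboveI2[where M=2]) (simp add: pre cov_ind[OF A])
  qed
  finally show ?thesis .
qed

lemma u_nonneg: assumes A: "A \<in> sets borel" shows "0 \<le> u A k"
  using u_bound[OF A, of 1 k] by linarith

lemma cov_disj: assumes A: "A \<in> sets borel" and B: "B \<in> sets borel" and d: "A \<inter> B = {}"
  shows "cov i j (indicator (A \<union> B)) (indicator (A \<union> B)) =
     cov i j (indicator A) (indicator A) + cov i j (indicator A) (indicator B)
   + cov i j (indicator B) (indicator A) + cov i j (indicator B) (indicator B)"
proof -
  define \<phi> where "\<phi> = (\<lambda>l::nat. if l = 0 then (indicator A :: 'a \<Rightarrow> real) else indicator B)"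
  have "indicator (A \<union> B) = (\<lambda>x. \<Sum>l\<in>{0::nat,1}. 1 * \<phi> l x)"
    using d by (auto simp: \<phi>_def indicator_def fun_eq_iff)
  then have "cov i j (indicator (A \<union> B)) (indicator (A \<union> B))
     = (\<Sum>l\<in>{0::nat,1}. \<Sum>m\<in>{0::nat,1}. 1 * 1 * cov i j (\<phi> l) (\<phi> m))"
    using cov_sum[of "{0::nat,1}" \<phi> i j "\<lambda>_. 1"] BM_ind A B by (auto simp: \<phi>_def)
  then show ?thesis by (simp add: \<phi>_def)
qed

lemma UD_simple:
  fixes J :: "'j set" and A :: "'j \<Rightarrow> 'a set" and c :: "'j \<Rightarrow> real"
  assumes J: "finite J" and A: "\<And>l. l \<in> J \<Longrightarrow> A l \<in> sets borel"
    and d: "\<And>l m. l \<in> J \<Longrightarrow> m \<in> J \<Longrightarrow> l \<noteq> m \<Longrightarrow> A l \<inter> A m = {}"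
    and mix: "\<And>B. B \<in> sets borel \<Longrightarrow> u B \<longlonglongrightarrow> 0"
  shows "\<exists>U. U \<longlonglongrightarrow> 0 \<and> (\<forall>i k. 1 \<le> i \<longrightarrow>
      2 * \<bar>cov i (i + k) (\<lambda>x. \<Sum>l\<in>J. c l * indicator (A l) x) (\<lambda>x. \<Sum>l\<in>J. c l * indicator (A l) x)\<bar> \<le> U k)"
proof -
  define U where "U k = (\<Sum>l\<in>J. \<Sum>m\<in>J. \<bar>c l * c m\<bar> * (u (A l \<union> A m) k + u (A l) k + u (A m) k))" for k
  have "U \<longlonglongrightarrow> (\<Sum>l\<in>J. \<Sum>m\<in>J. \<bar>c l * c m\<bar> * (0 + 0 + 0))"
    unfolding U_def by (intro tendsto_intros mix sets.Un A) auto
  then have U0: "U \<longlonglongrightarrow> 0" by simp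
  have bnd: "2 * \<bar>cov i (i + k) (\<lambda>x. \<Sum>l\<in>J. c l * indicator (A l) x) (\<lambda>x. \<Sum>l\<in>J. c l * indicator (A l) x)\<bar> \<le> U k"
    if i: "1 \<le> i" for i k
  proof -
    let ?E = "\<lambda>l m. cov i (i + k) (indicator (A l)) (indicator (A m))"
    have c1: "cov i (i + k) (\<lambda>x. \<Sum>l\<in>J. c l * indicator (A l) x) (\<lambda>x. \<Sum>l\<in>J. c l * indicator (A l) x)
       = (\<Sum>l\<in>J. \<Sum>m\<in>J. c l * c m * ?E l m)"
      by (rule cov_sum) (use J A BM_ind in auto)
    have s: "(\<Sum>l\<in>J. \<Sum>m\<in>J. c l * c m * ?E l m) = (\<Sum>l\<in>J. \<Sum>m\<in>J. c l * c m * ?E m l)"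
      by (subst sum.swap) (simp add: mult.commute)
    have "2 * cov i (i + k) (\<lambda>x. \<Sum>l\<in>J. c l * indicator (A l) x) (\<lambda>x. \<Sum>l\<in>J. c l * indicator (A l) x)
       = (\<Sum>l\<in>J. \<Sum>m\<in>J. c l * c m * ?E l m) + (\<Sum>l\<in>J. \<Sum>m\<in>J. c l * c m * ?E m l)"
      using c1 s by simp
    also have "\<dots> = (\<Sum>l\<in>J. \<Sum>m\<in>J. c l * c m * (?E l m + ?E m l))"
      by (simp add: sum.distrib distrib_left)
    finally have "2 * cov i (i + k) (\<lambda>x. \<Sum>l\<in>J. c l * indicator (A l) x) (\<lambda>x. \<Sum>l\<in>J. c l * indicator (A l) x)
       = (\<Sum>l\<in>J. \<Sum>m\<in>J. c l * c m * (?E l m + ?E m l))" .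
    then have "2 * \<bar>cov i (i + k) (\<lambda>x. \<Sum>l\<in>J. c l * indicator (A l) x) (\<lambda>x. \<Sum>l\<in>J. c l * indicator (A l) x)\<bar>
       = \<bar>\<Sum>l\<in>J. \<Sum>m\<in>J. c l * c m * (?E l m + ?E m l)\<bar>" by simp
    also have "\<dots> \<le> (\<Sum>l\<in>J. \<Sum>m\<in>J. \<bar>c l * c m * (?E l m + ?E m l)\<bar>)"
      by (rule order_trans[OF sum_abs]) (intro sum_mono sum_abs)
    also have "\<dots> \<le> U k" unfolding U_def
    proof (intro sum_mono)
      fix l m assume l: "l \<in> J" and m: "m \<in> J"
      have "\<bar>?E l m + ?E m l\<bar> \<le> u (A l \<union> A m) k + u (A l) k + u (A m) k"
      proof (cases "l = m")
        case True
        then show ?thesis using u_bound[OF A[OF l] i, of k] u_nonneg[OF A[OF l], of k] by simp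
      next
        case False
        have "?E l m + ?E m l = cov i (i + k) (indicator (A l \<union> A m)) (indicator (A l \<union> A m))
            - ?E l l - ?E m m"
          using cov_disj[OF A[OF l] A[OF m] d[OF l m False]] by simp
        then show ?thesis
          using u_bound[OF sets.Un[OF A[OF l] A[OF m]] i, of k] u_bound[OF A[OF l] i, of k] u_bound[OF A[OF m] i, of k]
          by linarith
      qed
      then show "\<bar>c l * c m * (?E l m + ?E m l)\<bar> \<le> \<bar>c l * c m\<bar> * (u (A l \<union> A m) k + u (A l) k + u (A m) k)"
        by (simp add: abs_mult mult_left_mono)
    qed
    finally show ?thesis .
  qed
  show ?thesis using U0 bnd by blast
qed


lemma prod_approx:
  fixes a b a' b' Mb d :: real
  assumes "\<bar>a\<bar> \<le> Mb" "\<bar>b\<bar> \<le> Mb" "\<bar>a - a'\<bar> \<le> d" "\<bar>b - b'\<bar> \<le> d"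
  shows "\<bar>a * b - a' * b'\<bar> \<le> d * (2 * Mb + d)"
proof -
  have e: "a * b - a' * b' = a * (b - b') + (a - a') * b'" by (simp add: algebra_simps)
  have b': "\<bar>b'\<bar> \<le> Mb + d" using assms by linarith
  have "\<bar>a * (b - b')\<bar> \<le> Mb * d" unfolding abs_mult
    using assms by (intro mult_mono) auto
  moreover have "\<bar>(a - a') * b'\<bar> \<le> d * (Mb + d)" unfolding abs_mult
    using assms b' by (intro mult_mono) auto
  ultimately show ?thesis unfolding e by (simp add: algebra_simps)
qed

lemma cov_approx:
  assumes g: "BM g" and f: "BM f" and Mg: "\<And>x. \<bar>g x\<bar> \<le> Mg" and d: "\<And>x. \<bar>g x - f x\<bar> \<le> d"
  shows "\<bar>cov i j g g - cov i j f f\<bar> \<le> 2 * (d * (2 * Mg + d))"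
proof -
  have 1: "\<bar>(\<integral>x. g ((S ^^ i) x) * g ((S ^^ j) x) \<partial>M) - (\<integral>x. f ((S ^^ i) x) * f ((S ^^ j) x) \<partial>M)\<bar>
      \<le> d * (2 * Mg + d)"
  proof -
    have "(\<integral>x. g ((S ^^ i) x) * g ((S ^^ j) x) \<partial>M) - (\<integral>x. f ((S ^^ i) x) * f ((S ^^ j) x) \<partial>M)
      = (\<integral>x. g ((S ^^ i) x) * g ((S ^^ j) x) - f ((S ^^ i) x) * f ((S ^^ j) x) \<partial>M)"
      by (rule Bochner_Integration.integral_diff[symmetric]) (use BM_int2 g f in auto)
    also have "\<bar>\<dots>\<bar> \<le> d * (2 * Mg + d)"
      by (rule abs_int_le) (use BM_int2 g f prod_approx Mg d in auto)
    finally show ?thesis .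
  qed
  have m: "\<bar>(\<integral>x. g ((S ^^ k) x) \<partial>M)\<bar> \<le> Mg" for k
    by (rule abs_int_le) (use BM_int g Mg in auto)
  have md: "\<bar>(\<integral>x. g ((S ^^ k) x) \<partial>M) - (\<integral>x. f ((S ^^ k) x) \<partial>M)\<bar> \<le> d" for k
  proof -
    have "(\<integral>x. g ((S ^^ k) x) \<partial>M) - (\<integral>x. f ((S ^^ k) x) \<partial>M) = (\<integral>x. g ((S ^^ k) x) - f ((S ^^ k) x) \<partial>M)"
      by (rule Bochner_Integration.integral_diff[symmetric]) (use BM_int g f in auto)
    also have "\<bar>\<dots>\<bar> \<le> d" by (rule abs_int_le) (use BM_int g f d in auto)
    finally show ?thesis .
  qed
  have 2: "\<bar>(\<integral>x. g ((S ^^ i) x) \<partial>M) * (\<integral>x. g ((S ^^ j) x) \<partial>M)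
      - (\<integral>x. f ((S ^^ i) x) \<partial>M) * (\<integral>x. f ((S ^^ j) x) \<partial>M)\<bar> \<le> d * (2 * Mg + d)"
    by (rule prod_approx) (use m md in auto)
  show ?thesis using 1 2 unfolding cov_def by linarith
qed

lemma level_approx:
  fixes g :: "'a \<Rightarrow> real"
  assumes g: "g \<in> borel_measurable borel" and Mg: "\<And>x. \<bar>g x\<bar> \<le> Mg" and d: "0 < d"
  shows "\<exists>(J::int set) A. finite J \<and> (\<forall>j\<in>J. A j \<in> sets borel) \<and>
     (\<forall>l\<in>J. \<forall>m\<in>J. l \<noteq> m \<longrightarrow> A l \<inter> A m = {}) \<and>
     (\<forall>x. \<bar>g x - (\<Sum>j\<in>J. (d * of_int j) * indicator (A j) x)\<bar> \<le> d)"
proof -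
  define h where "h x = \<lfloor>g x / d\<rfloor>" for x
  define J where "J = range h"
  define A where "A j = h -` {j}" for j
  have hm: "h \<in> measurable borel (count_space UNIV)" unfolding h_def by measurable (use g in auto)
  have "J \<subseteq> {\<lfloor>- Mg / d\<rfloor>..\<lfloor>Mg / d\<rfloor>}"
  proof
    fix j assume "j \<in> J"
    then obtain x where x: "j = h x" unfolding J_def by auto
    have "- Mg \<le> g x" "g x \<le> Mg" using Mg[of x] by auto
    then have "- Mg / d \<le> g x / d" "g x / d \<le> Mg / d" using d by (simp_all add: field_simps)
    then show "j \<in> {\<lfloor>- Mg / d\<rfloor>..\<lfloor>Mg / d\<rfloor>}" unfolding x h_def by (auto intro: floor_mono)
  qed
  then have fin: "finite J" using finite_subset by blast
  have As: "A j \<in> sets borel" for j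
    unfolding A_def using measurable_sets[OF hm, of "{j}"] by simp
  have dis: "\<forall>l\<in>J. \<forall>m\<in>J. l \<noteq> m \<longrightarrow> A l \<inter> A m = {}" unfolding A_def by auto
  have app: "\<bar>g x - (\<Sum>j\<in>J. (d * of_int j) * indicator (A j) x)\<bar> \<le> d" for x
  proof -
    have "(\<Sum>j\<in>J. (d * of_int j) * indicator (A j) x) = (\<Sum>j\<in>J. if h x = j then d * of_int j else 0)"
      by (intro sum.cong) (auto simp: A_def indicator_def)
    also have "\<dots> = d * of_int (h x)" using fin by (simp add: J_def)
    finally have e: "(\<Sum>j\<in>J. (d * of_int j) * indicator (A j) x) = d * of_int (h x)" .
    have "of_int (h x) \<le> g x / d" "g x / d < of_int (h x) + 1" unfolding h_def by linarith+
    then have "d * of_int (h x) \<le> g x" "g x < d * of_int (h x) + d" using d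
      by (auto simp: field_simps)
    then show ?thesis unfolding e by linarith
  qed
  show ?thesis using fin As dis app by blast
qed

lemma UD:
  assumes g: "BM g" and mix: "\<And>B. B \<in> sets borel \<Longrightarrow> u B \<longlonglongrightarrow> 0" and e: "0 < e"
  shows "\<exists>K. \<forall>i k. 1 \<le> i \<longrightarrow> K \<le> k \<longrightarrow> \<bar>cov i (i + k) g g\<bar> \<le> e"
proof -
  obtain Mg where Mg: "\<And>x. \<bar>g x\<bar> \<le> Mg" using g unfolding BM_def by blast
  have Mg0: "0 \<le> Mg" using Mg[of undefined] by linarith
  define d where "d = min 1 (e / (4 * (2 * Mg + 1)))"
  have d0: "0 < d" using e Mg0 by (simp add: d_def)
  have d1: "d \<le> 1" by (simp add: d_def)
  have "d \<le> e / (4 * (2 * Mg + 1))" by (simp add: d_def)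
  then have "d * (4 * (2 * Mg + 1)) \<le> e" using Mg0 by (simp add: pos_le_divide_eq)
  moreover have "d * (2 * Mg + d) \<le> d * (2 * Mg + 1)" using d0 d1 by (intro mult_left_mono) auto
  ultimately have derr: "2 * (d * (2 * Mg + d)) \<le> e / 2" by (simp add: algebra_simps)
  obtain J :: "int set" and A where J: "finite J" and A: "\<forall>j\<in>J. A j \<in> sets borel"
    and dis: "\<forall>l\<in>J. \<forall>m\<in>J. l \<noteq> m \<longrightarrow> A l \<inter> A m = {}"
    and app: "\<forall>x. \<bar>g x - (\<Sum>j\<in>J. (d * of_int j) * indicator (A j) x)\<bar> \<le> d"
    using level_approx[of g Mg d] g Mg d0 unfolding BM_def by blast
  define f where "f x = (\<Sum>j\<in>J. (d * of_int j) * indicator (A j) x)" for x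
  have fBM: "BM f"
    unfolding BM_def
  proof
    show "f \<in> borel_measurable borel" unfolding f_def using A by measurable
    have "\<bar>f x\<bar> \<le> Mg + d" for x
      using app[rule_format, of x] Mg[of x] unfolding f_def by linarith
    then show "\<exists>B. \<forall>x. \<bar>f x\<bar> \<le> B" by blast
  qed
  obtain U where U0: "U \<longlonglongrightarrow> 0" and Ub: "\<forall>i k. 1 \<le> i \<longrightarrow> 2 * \<bar>cov i (i + k) f f\<bar> \<le> U k"
    using UD_simple[of J A "\<lambda>j. d * of_int j"] J A dis mix unfolding f_def by blast
  have "\<forall>\<^sub>F k in sequentially. U k < e" using order_tendstoD(2)[OF U0 e] .
  then obtain K where K: "\<And>k. K \<le> k \<Longrightarrow> U k < e" unfolding eventually_sequentially by blast
  have "\<bar>cov i (i + k) g g\<bar> \<le> e" if "1 \<le> i" "K \<le> k" for i k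
  proof -
    have "\<bar>cov i (i + k) g g - cov i (i + k) f f\<bar> \<le> 2 * (d * (2 * Mg + d))"
      by (rule cov_approx[OF g fBM Mg]) (use app f_def in auto)
    moreover have "2 * \<bar>cov i (i + k) f f\<bar> \<le> U k" using Ub that by auto
    ultimately show ?thesis using K[OF that(2)] derr by linarith
  qed
  then show ?thesis by blast
qed


lemma mean_conv:
  fixes \<nu> :: "'a measure"
  assumes g: "BM g" and nus: "sets \<nu> = sets borel" and nup: "prob_space \<nu>"
    and conv: "\<And>A. A \<in> sets borel \<Longrightarrow> (\<lambda>k. measure M ((S ^^ k) -` A)) \<longlonglongrightarrow> measure \<nu> A"
  shows "(\<lambda>i. \<integral>x. g ((S ^^ i) x) \<partial>M) \<longlonglongrightarrow> (\<integral>x. g x \<partial>\<nu>)"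
proof (rule LIMSEQ_I)
  fix e :: real assume e: "0 < e"
  have spnu: "space \<nu> = UNIV" using sets_eq_imp_space_eq[OF nus] by simp
  have mnu: "measurable \<nu> N = measurable borel N" for N by (rule measurable_cong_sets[OF nus refl])
  obtain Mg where Mg: "\<And>x. \<bar>g x\<bar> \<le> Mg" and gm: "g \<in> borel_measurable borel" using g unfolding BM_def by blast
  define d where "d = e / 4"
  have d0: "0 < d" using e by (simp add: d_def)
  obtain J :: "int set" and A where J: "finite J" and A: "\<forall>j\<in>J. A j \<in> sets borel"
    and app: "\<forall>x. \<bar>g x - (\<Sum>j\<in>J. (d * of_int j) * indicator (A j) x)\<bar> \<le> d"
    using level_approx[of g Mg d] gm Mg d0 by blast
  define f where "f x = (\<Sum>j\<in>J. (d * of_int j) * indicator (A j) x)" for x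
  have A': "\<And>j. j \<in> J \<Longrightarrow> A j \<in> sets borel" using A by blast
  have fm: "f \<in> borel_measurable borel" unfolding f_def using A by measurable
  have fb: "\<bar>f x\<bar> \<le> Mg + d" for x
    using app[rule_format, of x] Mg[of x] unfolding f_def by linarith
  have fBM: "BM f" unfolding BM_def using fm fb by blast
  have ef: "(\<integral>x. f ((S ^^ i) x) \<partial>M) = (\<Sum>j\<in>J. (d * of_int j) * measure M ((S ^^ i) -` A j))" for i
  proof -
    have "(\<integral>x. f ((S ^^ i) x) \<partial>M) = (\<Sum>j\<in>J. (d * of_int j) * (\<integral>x. indicator (A j) ((S ^^ i) x) \<partial>M))"
      unfolding f_def
      by (subst Bochner_Integration.integral_sum)
        (auto intro!: integrable_mult_right BM_int BM_ind A')
    moreover have "(\<lambda>x. indicator (A j) ((S ^^ i) x)) = (indicator ((S ^^ i) -` A j) :: 'a \<Rightarrow> real)" for j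
      by (auto simp: indicator_def fun_eq_iff)
    ultimately show ?thesis by simp
  qed
  have enu: "(\<integral>x. f x \<partial>\<nu>) = (\<Sum>j\<in>J. (d * of_int j) * measure \<nu> (A j))"
  proof -
    interpret nu: prob_space \<nu> by (rule nup)
    have "(\<integral>x. f x \<partial>\<nu>) = (\<Sum>j\<in>J. (d * of_int j) * (\<integral>x. indicator (A j) x \<partial>\<nu>))"
      unfolding f_def
      by (subst Bochner_Integration.integral_sum)
        (auto intro!: integrable_mult_right integrable_real_indicator A' simp: nus top.not_eq_extremum[symmetric])
    then show ?thesis by (simp add: spnu)
  qed
  have "(\<lambda>i. \<integral>x. f ((S ^^ i) x) \<partial>M) \<longlonglongrightarrow> (\<integral>x. f x \<partial>\<nu>)"
    unfolding ef enu by (intro tendsto_intros conv) (use A in auto)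
  from order_tendstoD(2)[OF tendsto_norm[OF LIM_zero[OF this]]] d0
  have "\<forall>\<^sub>F i in sequentially. norm ((\<integral>x. f ((S ^^ i) x) \<partial>M) - (\<integral>x. f x \<partial>\<nu>)) < d" by simp
  then obtain N where N: "\<And>i. N \<le> i \<Longrightarrow> \<bar>(\<integral>x. f ((S ^^ i) x) \<partial>M) - (\<integral>x. f x \<partial>\<nu>)\<bar> < d"
    unfolding eventually_sequentially by auto
  have b1: "\<bar>(\<integral>x. g ((S ^^ i) x) \<partial>M) - (\<integral>x. f ((S ^^ i) x) \<partial>M)\<bar> \<le> d" for i
  proof -
    have "(\<integral>x. g ((S ^^ i) x) \<partial>M) - (\<integral>x. f ((S ^^ i) x) \<partial>M) = (\<integral>x. g ((S ^^ i) x) - f ((S ^^ i) x) \<partial>M)"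
      by (rule Bochner_Integration.integral_diff[symmetric]) (use BM_int g fBM in auto)
    also have "\<bar>\<dots>\<bar> \<le> d"
      by (rule abs_int_le[OF Bochner_Integration.integrable_diff[OF BM_int[OF g] BM_int[OF fBM]]])
        (use app in \<open>simp add: f_def\<close>)
    finally show ?thesis .
  qed
  have b2: "\<bar>(\<integral>x. g x \<partial>\<nu>) - (\<integral>x. f x \<partial>\<nu>)\<bar> \<le> d"
  proof -
    interpret nu: prob_space \<nu> by (rule nup)
    have ig: "integrable \<nu> g"
      by (rule nu.integrable_const_bound[where B=Mg]) (use Mg gm mnu in auto)
    have iff: "integrable \<nu> f"
      by (rule nu.integrable_const_bound[where B="Mg + d"]) (use fb fm mnu in auto)
    have "(\<integral>x. g x \<partial>\<nu>) - (\<integral>x. f x \<partial>\<nu>) = (\<integral>x. g x - f x \<partial>\<nu>)"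
      by (rule Bochner_Integration.integral_diff[symmetric]) (use ig iff in auto)
    also have "\<bar>\<dots>\<bar> \<le> (\<integral>x. \<bar>g x - f x\<bar> \<partial>\<nu>)"
      using integral_norm_bound[of \<nu> "\<lambda>x. g x - f x"] by simp
    also have "\<dots> \<le> (\<integral>x. d \<partial>\<nu>)"
    proof (rule integral_mono)
      show "integrable \<nu> (\<lambda>x. \<bar>g x - f x\<bar>)" using ig iff by auto
    qed (use app in \<open>auto simp: f_def\<close>)
    also have "\<dots> = d" using nu.prob_space by simp
    finally show ?thesis .
  qed
  have "\<forall>i\<ge>N. norm ((\<integral>x. g ((S ^^ i) x) \<partial>M) - (\<integral>x. g x \<partial>\<nu>)) < e"
  proof (intro allI impI)
    fix i assume "N \<le> i"
    from N[OF this] b1[of i] b2 show "norm ((\<integral>x. g ((S ^^ i) x) \<partial>M) - (\<integral>x. g x \<partial>\<nu>)) < e"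
      unfolding d_def real_norm_def by linarith
  qed
  then show "\<exists>no. \<forall>n\<ge>no. norm ((\<integral>x. g ((S ^^ n) x) \<partial>M) - (\<integral>x. g x \<partial>\<nu>)) < e" by blast
qed


lemma cov_bound: assumes g: "BM g" and Mg: "\<And>x. \<bar>g x\<bar> \<le> Mg"
  shows "\<bar>cov i j g g\<bar> \<le> 2 * Mg\<^sup>2"
proof -
  have Mg0: "0 \<le> Mg" using Mg[of undefined] by linarith
  have p: "\<bar>g y * g z\<bar> \<le> Mg * Mg" for y z unfolding abs_mult using Mg Mg0 by (intro mult_mono) auto
  have 1: "\<bar>(\<integral>x. g ((S ^^ i) x) * g ((S ^^ j) x) \<partial>M)\<bar> \<le> Mg * Mg"
    by (rule abs_int_le) (use BM_int2 g p in auto)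
  have m: "\<bar>(\<integral>x. g ((S ^^ k) x) \<partial>M)\<bar> \<le> Mg" for k
    by (rule abs_int_le) (use BM_int g Mg in auto)
  have 2: "\<bar>(\<integral>x. g ((S ^^ i) x) \<partial>M) * (\<integral>x. g ((S ^^ j) x) \<partial>M)\<bar> \<le> Mg * Mg"
    unfolding abs_mult using m Mg0 by (intro mult_mono) auto
  show ?thesis using 1 2 unfolding cov_def power2_eq_square by linarith
qed

end

lemma count_bound:
  fixes n K N :: nat
  shows "(\<Sum>i=1..n. \<Sum>j=1..n. ((if i < j + K \<and> j < i + K then 1 else 0) + (if i < N then 1 else 0)
     + (if j < N then 1 else 0) :: real)) \<le> real n * (2 * K + 2 * N)"
proof -
  have row: "(\<Sum>j=1..n. (if i < j + K \<and> j < i + K then 1 else 0 :: real)) \<le> 2 * K" for i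
  proof -
    have "(\<Sum>j=1..n. (if i < j + K \<and> j < i + K then 1 else 0 :: real))
        = real (card {j\<in>{1..n}. i < j + K \<and> j < i + K})"
      by (simp add: sum.inter_filter[symmetric])
    also have "card {j\<in>{1..n}. i < j + K \<and> j < i + K} \<le> card {i - K..<i + K}"
      by (rule card_mono) auto
    also have "card {i - K..<i + K} \<le> 2 * K" by simp
    finally show ?thesis by simp
  qed
  have col: "(\<Sum>j=1..n. (if j < N then 1 else 0 :: real)) \<le> N"
  proof -
    have "(\<Sum>j=1..n. (if j < N then 1 else 0 :: real)) = real (card {j\<in>{1..n}. j < N})"
      by (simp add: sum.inter_filter[symmetric])
    also have "card {j\<in>{1..n}. j < N} \<le> card {..<N}" by (rule card_mono) auto
    finally show ?thesis by simp
  qed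
  have "(\<Sum>i=1..n. \<Sum>j=1..n. ((if i < j + K \<and> j < i + K then 1 else 0) + (if i < N then 1 else 0)
     + (if j < N then 1 else 0) :: real))
     = (\<Sum>i=1..n. (\<Sum>j=1..n. (if i < j + K \<and> j < i + K then 1 else 0 :: real))
         + real n * (if i < N then 1 else 0) + (\<Sum>j=1..n. (if j < N then 1 else 0 :: real)))"
    by (simp add: sum.distrib)
  also have "\<dots> \<le> (\<Sum>i=1..n. 2 * K + real n * (if i < N then 1 else 0) + N)"
    by (intro sum_mono add_mono row col order_refl)
  also have "\<dots> = real n * (2 * K + N) + real n * (\<Sum>i=1..n. (if i < N then 1 else 0 :: real))"
    by (simp add: sum.distrib sum_distrib_left algebra_simps)
  also have "\<dots> \<le> real n * (2 * K + N) + real n * N"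
    using col by (intro add_left_mono mult_left_mono) auto
  finally show ?thesis by (simp add: algebra_simps)
qed


context ast
begin

lemma L2:
  assumes g: "BM g" and mix: "\<And>B. B \<in> sets borel \<Longrightarrow> u B \<longlonglongrightarrow> 0"
    and mc: "(\<lambda>i. \<integral>x. g ((S ^^ i) x) \<partial>M) \<longlonglongrightarrow> c"
    and Mg: "\<And>x. \<bar>g x\<bar> \<le> Mg" and cb: "\<bar>c\<bar> \<le> Mg"
  shows "(\<lambda>n. \<integral>x. (1 / real n * (\<Sum>i=1..n. g ((S ^^ i) x)) - c)\<^sup>2 \<partial>M) \<longlonglongrightarrow> 0"
proof (rule LIMSEQ_I)
  fix r :: real assume r: "0 < r"
  have Mg0: "0 \<le> Mg" using Mg[of undefined] by linarith
  define m where "m i = (\<integral>x. g ((S ^^ i) x) \<partial>M)" for i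
  define a where "a i j = (\<integral>x. (g ((S ^^ i) x) - c) * (g ((S ^^ j) x) - c) \<partial>M)" for i j
  have gc: "BM (\<lambda>y. g y - c)" using g unfolding BM_def
  proof (intro conjI)
    have "\<bar>g x - c\<bar> \<le> Mg + Mg" for x using Mg[of x] cb by linarith
    then show "\<exists>B. \<forall>x. \<bar>g x - c\<bar> \<le> B" by blast
  qed auto
  have aeq: "a i j = cov i j g g + (m i - c) * (m j - c)" for i j
  proof -
    have "(\<lambda>x. (g ((S ^^ i) x) - c) * (g ((S ^^ j) x) - c))
      = (\<lambda>x. g ((S ^^ i) x) * g ((S ^^ j) x) - (c * g ((S ^^ j) x) + c * g ((S ^^ i) x) - c * c))"
      by (auto simp: algebra_simps fun_eq_iff)
    then have "a i j = (\<integral>x. g ((S ^^ i) x) * g ((S ^^ j) x) \<partial>M) - (c * m j + c * m i - c * c)"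
      unfolding a_def m_def
      using BM_int2[OF g g, of i j] BM_int[OF g, of i] BM_int[OF g, of j]
      using prob_space by simp
    then show ?thesis unfolding cov_def m_def by (simp add: algebra_simps)
  qed
  have expr: "(\<integral>x. (1 / real n * (\<Sum>i=1..n. g ((S ^^ i) x)) - c)\<^sup>2 \<partial>M)
      = (\<Sum>i=1..n. \<Sum>j=1..n. a i j) / (real n)\<^sup>2" if n: "1 \<le> n" for n
  proof -
    have pw: "(1 / real n * (\<Sum>i=1..n. g ((S ^^ i) x)) - c)\<^sup>2
        = (\<Sum>i=1..n. \<Sum>j=1..n. (g ((S ^^ i) x) - c) * (g ((S ^^ j) x) - c)) / (real n)\<^sup>2" for x
    proof -
      have "1 / real n * (\<Sum>i=1..n. g ((S ^^ i) x)) - c = (\<Sum>i=1..n. g ((S ^^ i) x) - c) / real n"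
        using n by (simp add: sum_subtractf field_simps)
      then show ?thesis by (simp add: power2_eq_square sum_product power_divide)
    qed
    have "(\<integral>x. (\<Sum>i=1..n. \<Sum>j=1..n. (g ((S ^^ i) x) - c) * (g ((S ^^ j) x) - c)) \<partial>M)
        = (\<Sum>i=1..n. \<Sum>j=1..n. a i j)"
      unfolding a_def
    proof -
      have "(\<integral>x. (\<Sum>i=1..n. \<Sum>j=1..n. (g ((S ^^ i) x) - c) * (g ((S ^^ j) x) - c)) \<partial>M)
         = (\<Sum>i=1..n. (\<integral>x. (\<Sum>j=1..n. (g ((S ^^ i) x) - c) * (g ((S ^^ j) x) - c)) \<partial>M))"
        by (rule Bochner_Integration.integral_sum[where f="\<lambda>i x. \<Sum>j=1..n. (g ((S ^^ i) x) - c) * (g ((S ^^ j) x) - c)"])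
          (use BM_int2[OF gc gc] in \<open>auto intro!: integrable_sum\<close>)
      also have "\<dots> = (\<Sum>i=1..n. \<Sum>j=1..n. (\<integral>x. (g ((S ^^ i) x) - c) * (g ((S ^^ j) x) - c) \<partial>M))"
        by (intro sum.cong refl, subst Bochner_Integration.integral_sum) (use BM_int2[OF gc gc] in auto)
      finally show "(\<integral>x. (\<Sum>i=1..n. \<Sum>j=1..n. (g ((S ^^ i) x) - c) * (g ((S ^^ j) x) - c)) \<partial>M)
         = (\<Sum>i=1..n. \<Sum>j=1..n. (\<integral>x. (g ((S ^^ i) x) - c) * (g ((S ^^ j) x) - c) \<partial>M))" .
    qed
    then show ?thesis unfolding pw by simp
  qed
  define e where "e = r / 4"
  have e0: "0 < e" using r by (simp add: e_def)
  obtain K where K: "\<And>i k. 1 \<le> i \<Longrightarrow> K \<le> k \<Longrightarrow> \<bar>cov i (i + k) g g\<bar> \<le> e"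
    using UD[OF g mix e0] by blast
  have "\<forall>\<^sub>F i in sequentially. norm (m i - c) < min 1 e"
    using order_tendstoD(2)[OF tendsto_norm[OF LIM_zero[OF mc]], of "min 1 e"] e0 unfolding m_def by simp
  then obtain N where N: "\<And>i. N \<le> i \<Longrightarrow> \<bar>m i - c\<bar> < min 1 e"
    unfolding eventually_sequentially by auto
  define B where "B = 6 * Mg\<^sup>2"
  have B0: "0 \<le> B" by (simp add: B_def)
  have mb: "\<bar>m i\<bar> \<le> Mg" for i unfolding m_def by (rule abs_int_le) (use BM_int g Mg in auto)
  have tb: "\<bar>a i j\<bar> \<le> 2 * e + B * ((if i < j + K \<and> j < i + K then 1 else 0) + (if i < N then 1 else 0)
     + (if j < N then 1 else 0))" if ij: "1 \<le> i" "1 \<le> j" for i j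
  proof -
    have c1: "\<bar>cov i j g g\<bar> \<le> e + B * (if i < j + K \<and> j < i + K then 1 else 0)"
    proof (cases "i < j + K \<and> j < i + K")
      case True
      then show ?thesis using cov_bound[OF g Mg, of i j] e0 by (simp add: B_def)
    next
      case False
      then have "\<bar>cov i j g g\<bar> \<le> e"
      proof (cases "i \<le> j")
        case True
        with False have "K \<le> j - i" by linarith
        from K[OF ij(1) this] True show ?thesis by simp
      next
        case f2: False
        with False have "K \<le> i - j" by linarith
        from K[OF ij(2) this] f2 show ?thesis by (simp add: cov_sym[of i j])
      qed
      then show ?thesis using False by auto
    qed
    have c2: "\<bar>(m i - c) * (m j - c)\<bar> \<le> e + B * ((if i < N then 1 else 0) + (if j < N then 1 else 0))"
    proof (cases "N \<le> i \<and> N \<le> j")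
      case True
      then have "\<bar>m i - c\<bar> \<le> 1" "\<bar>m j - c\<bar> \<le> e" using N by force+
      then have "\<bar>(m i - c) * (m j - c)\<bar> \<le> 1 * e" unfolding abs_mult by (intro mult_mono) auto
      then show ?thesis using True by simp
    next
      case False
      have "\<bar>m i - c\<bar> \<le> 2 * Mg" "\<bar>m j - c\<bar> \<le> 2 * Mg" using mb[of i] mb[of j] cb by linarith+
      then have "\<bar>(m i - c) * (m j - c)\<bar> \<le> (2 * Mg) * (2 * Mg)" unfolding abs_mult
        by (intro mult_mono) auto
      then have "\<bar>(m i - c) * (m j - c)\<bar> \<le> B" by (simp add: B_def power2_eq_square)
      moreover have "B \<le> B * ((if i < N then 1 else 0) + (if j < N then 1 else 0))"
        using False B0 by auto
      ultimately show ?thesis using e0 by linarith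
    qed
    show ?thesis unfolding aeq using c1 c2 by (simp add: algebra_simps)
  qed
  obtain n0 :: nat where n0: "B * (2 * K + 2 * N) / e < n0" using reals_Archimedean2 by blast
  have "norm ((\<integral>x. (1 / real n * (\<Sum>i=1..n. g ((S ^^ i) x)) - c)\<^sup>2 \<partial>M) - 0) < r"
    if n: "max 1 n0 \<le> n" for n
  proof -
    have n1: "1 \<le> n" using n by simp
    have np: "0 < real n" using n1 by simp
    have "B * (2 * K + 2 * N) < e * n0" using n0 e0 by (simp add: field_simps)
    also have "\<dots> \<le> e * n" using n e0 by (intro mult_left_mono) auto
    finally have Bn: "B * (2 * K + 2 * N) < e * n" .
    have "\<bar>\<Sum>i=1..n. \<Sum>j=1..n. a i j\<bar> \<le> (\<Sum>i=1..n. \<Sum>j=1..n. \<bar>a i j\<bar>)"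
      by (rule order_trans[OF sum_abs]) (intro sum_mono sum_abs)
    also have "\<dots> \<le> (\<Sum>i=1..n. \<Sum>j=1..n. 2 * e + B * ((if i < j + K \<and> j < i + K then 1 else 0)
        + (if i < N then 1 else 0) + (if j < N then 1 else 0)))"
      by (intro sum_mono tb) auto
    also have "\<dots> = real n * real n * (2 * e) + B * (\<Sum>i=1..n. \<Sum>j=1..n. ((if i < j + K \<and> j < i + K then 1 else 0)
        + (if i < N then 1 else 0) + (if j < N then 1 else 0)))"
    proof -
      have c: "(\<Sum>i=1..n. \<Sum>j=1..n. (2::real) * e) = real n * real n * (2 * e)" by simp
      show ?thesis unfolding c[symmetric] by (simp only: sum.distrib sum_distrib_left distrib_left add.assoc)
    qed
    also have "\<dots> \<le> real n * real n * (2 * e) + B * (real n * (2 * K + 2 * N))"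
      by (intro add_left_mono mult_left_mono count_bound B0)
    also have "\<dots> \<le> real n * real n * (2 * e) + real n * (e * n)"
      using mult_right_mono[OF less_imp_le[OF Bn], of "real n"] by (simp add: algebra_simps)
    finally have "\<bar>\<Sum>i=1..n. \<Sum>j=1..n. a i j\<bar> \<le> (real n)\<^sup>2 * (3 * e)"
      by (simp add: power2_eq_square algebra_simps)
    then have "\<bar>(\<Sum>i=1..n. \<Sum>j=1..n. a i j) / (real n)\<^sup>2\<bar> \<le> 3 * e"
      using np by (simp add: abs_div pos_divide_le_eq mult.commute)
    moreover have "3 * e < r" using r by (simp add: e_def)
    ultimately show ?thesis unfolding expr[OF n1] diff_zero real_norm_def by linarith
  qed
  then show "\<exists>no. \<forall>n\<ge>no. norm ((\<integral>x. (1 / real n * (\<Sum>i=1..n. g ((S ^^ i) x)) - c)\<^sup>2 \<partial>M) - 0) < r"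
    by blast
qed

end


theorem proposition3p3:
  fixes \<mu> \<nu> :: "'a::{metric_space, second_countable_topology} measure"
    and S :: "'a \<Rightarrow> 'a"
    and g :: "'a \<Rightarrow> real"
  assumes "prob_space \<mu>" and "sets \<mu> = sets borel"
    and "S \<in> borel_measurable borel"
    and "\<forall>A\<in>sets borel.
           (\<lambda>k. SUP i\<in>{1::nat..}. \<bar>measure \<mu> ((S ^^ i) -` A \<inter> (S ^^ k) -` ((S ^^ i) -` A))
                - measure \<mu> ((S ^^ i) -` A) * measure \<mu> ((S ^^ k) -` ((S ^^ i) -` A))\<bar>)
           \<longlonglongrightarrow> 0"
    and "asymptotically_stationary \<mu> S \<nu>"
    and "continuous_on UNIV g" and "bounded (range g)"
  shows "(\<lambda>n. \<integral>x. (\<bar>(1 / real n) * (\<Sum>i=1..n. g (x i)) - (\<integral>y. g y \<partial>\<nu>)\<bar>)\<^sup>2 \<partial>(mu_n \<mu> S n))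
           \<longlonglongrightarrow> 0"
proof -
  interpret A: ast \<mu> S unfolding ast_def ast_axioms_def using assms(1-3) by auto
  have nus: "sets \<nu> = sets borel" and conv_e: "\<And>A. A \<in> sets borel \<Longrightarrow>
      (\<lambda>k. emeasure \<mu> ((S ^^ k) -` A)) \<longlonglongrightarrow> emeasure \<nu> A"
    using assms(5) unfolding asymptotically_stationary_def by auto
  have spnu: "space \<nu> = UNIV" using sets_eq_imp_space_eq[OF nus] by simp
  have "(\<lambda>k. emeasure \<mu> ((S ^^ k) -` UNIV)) \<longlonglongrightarrow> emeasure \<nu> UNIV" using conv_e[of UNIV] by simp
  moreover have "(\<lambda>k. emeasure \<mu> ((S ^^ k) -` UNIV)) = (\<lambda>k. 1)"
    using A.emeasure_space_1 by simp
  ultimately have "emeasure \<nu> UNIV = 1" using LIMSEQ_unique tendsto_const by metis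
  then have nup: "prob_space \<nu>" by (intro prob_spaceI) (simp add: spnu)
  interpret nu: prob_space \<nu> by (rule nup)
  have conv: "(\<lambda>k. measure \<mu> ((S ^^ k) -` A)) \<longlonglongrightarrow> measure \<nu> A" if "A \<in> sets borel" for A
  proof (rule tendsto_ennrealD)
    show "(\<lambda>k. ennreal (measure \<mu> ((S ^^ k) -` A))) \<longlonglongrightarrow> ennreal (measure \<nu> A)"
      using conv_e[OF that] by (simp add: A.emeasure_eq_measure nu.emeasure_eq_measure)
  qed auto
  obtain Mg where Mg: "\<And>x. \<bar>g x\<bar> \<le> Mg"
    using assms(7) unfolding bounded_iff by auto
  have gm[measurable]: "g \<in> borel_measurable borel" using assms(6) by (rule borel_measurable_continuous_onI)
  have g: "A.BM g" unfolding A.BM_def using gm Mg by blast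
  have mix: "A.u B \<longlonglongrightarrow> 0" if "B \<in> sets borel" for B
    unfolding A.u_def using assms(4) that by blast
  define c where "c = (\<integral>y. g y \<partial>\<nu>)"
  have mc: "(\<lambda>i. \<integral>x. g ((S ^^ i) x) \<partial>\<mu>) \<longlonglongrightarrow> c"
    unfolding c_def by (rule A.mean_conv[OF g nus nup conv])
  have cb: "\<bar>c\<bar> \<le> Mg"
  proof (rule LIMSEQ_le_const2[OF tendsto_rabs[OF mc]])
    show "\<exists>N. \<forall>n\<ge>N. \<bar>\<integral>x. g ((S ^^ n) x) \<partial>\<mu>\<bar> \<le> Mg"
      by (intro exI allI impI A.abs_int_le A.BM_int[OF g] Mg)
  qed
  have L: "(\<lambda>n. \<integral>x. (1 / real n * (\<Sum>i=1..n. g ((S ^^ i) x)) - c)\<^sup>2 \<partial>\<mu>) \<longlonglongrightarrow> 0"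
    by (rule A.L2[OF g mix mc Mg cb])
  have eq: "(\<integral>x. (\<bar>(1 / real n) * (\<Sum>i=1..n. g (x i)) - c\<bar>)\<^sup>2 \<partial>(mu_n \<mu> S n))
      = (\<integral>x. (1 / real n * (\<Sum>i=1..n. g ((S ^^ i) x)) - c)\<^sup>2 \<partial>\<mu>)" for n
  proof -
    have mp: "(\<lambda>x. \<lambda>i\<in>{1..n}. (S ^^ i) x) \<in> measurable \<mu> (PiM {1..n} (\<lambda>_. borel))"
      by (intro measurable_restrict A.Sn_meas_borel)
    have fm: "(\<lambda>x. (\<bar>(1 / real n) * (\<Sum>i=1..n. g (x i)) - c\<bar>)\<^sup>2) \<in> borel_measurable (PiM {1..n} (\<lambda>_. borel))"
      by measurable
    have "(\<integral>x. (\<bar>(1 / real n) * (\<Sum>i=1..n. g (x i)) - c\<bar>)\<^sup>2 \<partial>(mu_n \<mu> S n))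
        = (\<integral>x. (\<bar>(1 / real n) * (\<Sum>i=1..n. g ((\<lambda>i\<in>{1..n}. (S ^^ i) x) i)) - c\<bar>)\<^sup>2 \<partial>\<mu>)"
      unfolding mu_n_def by (rule integral_distr[OF mp fm])
    also have "\<dots> = (\<integral>x. (1 / real n * (\<Sum>i=1..n. g ((S ^^ i) x)) - c)\<^sup>2 \<partial>\<mu>)"
    proof -
      have "(\<Sum>i=1..n. g ((\<lambda>i\<in>{1..n}. (S ^^ i) x) i)) = (\<Sum>i=1..n. g ((S ^^ i) x))" for x
        by (rule sum.cong) auto
      then show ?thesis by simp
    qed
    finally show ?thesis .
  qed
  show ?thesis using L unfolding eq[unfolded c_def] c_def .
qed

end
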